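(* Let $U$ be a supertropical monoid and $E$ a TE-relation on $U$. Then the set $U/E$ of $E$-equivalence classes carries a unique structure of a supertropical monoid such that the map $\pi_E:U\to U/E$, $x\mapsto[x]_E$, is a transmission.
   Context: A supertropical monoid is a monoid $(U,\cdot)$ with absorbing element $0$ and a distinguished central idempotent $e$ with $ex=0\Rightarrow x=0$, together with a total ordering on $M:=eU$, compatible with multiplication and with $0$ least, making $M$ a bipotent semiring (addition $=\max$). A transmission $\alpha:U\to V$ is a map with $\alpha(0)=0$, $\alpha(1)=1$, $\alpha(xy)=\alpha(x)\alpha(y)$, $\alpha(e_U)=e_V$, and $x\le y\Rightarrow\alpha(x)\le\alpha(y)$ for $x,y\in eU$. An equivalence relation $E$ on $U$ is a TE-relation if: (TE1) it is multiplicative: $x\sim_E y\Rightarrow xz\sim_E yz$ and $zx\sim_E zy$; (TE2) its restriction to $M$ is order compatible: if $x_1,x_2,x_3,x_4\in M$ with $x_1\le x_2$, $x_3\le x_4$, $x_1\sim_E x_4$, $x_2\sim_E x_3$, then $x_1\sim_E x_2$; (TE3) if $x\in U$ and $ex\sim_E 0$, then $x\sim_E 0$. *)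

theory Defs
  imports Main
begin

text \<open>A monoid with absorbing zero, given on an explicit carrier set.
  st_e is the distinguished central idempotent e, st_le the ordering
  (only relevant on the ghost ideal M = eU).\<close>

record 'a stmonoid =
  st_carrier :: "'a set"
  st_mul :: "'a \<Rightarrow> 'a \<Rightarrow> 'a"
  st_one :: 'a
  st_zero :: 'a
  st_e :: 'a
  st_le :: "'a \<Rightarrow> 'a \<Rightarrow> bool"

definition ghost_set :: "('a, 'b) stmonoid_scheme \<Rightarrow> 'a set" where
  "ghost_set S = {st_mul S (st_e S) x | x. x \<in> st_carrier S}"

definition supertropical_monoid :: "('a, 'b) stmonoid_scheme \<Rightarrow> bool" where
  "supertropical_monoid S \<longleftrightarrow>
     (let U = st_carrier S; m = st_mul S; e = st_e S; z = st_zero S;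
          le = st_le S; M = ghost_set S in
       \<comment> \<open>monoid\<close>
       st_one S \<in> U \<and> z \<in> U \<and> e \<in> U \<and>
       (\<forall>x\<in>U. \<forall>y\<in>U. m x y \<in> U) \<and>
       (\<forall>x\<in>U. \<forall>y\<in>U. \<forall>w\<in>U. m (m x y) w = m x (m y w)) \<and>
       (\<forall>x\<in>U. m (st_one S) x = x \<and> m x (st_one S) = x) \<and>
       \<comment> \<open>absorbing zero\<close>
       (\<forall>x\<in>U. m z x = z \<and> m x z = z) \<and>
       \<comment> \<open>central idempotent e with ex = 0 implies x = 0\<close>
       (\<forall>x\<in>U. m e x = m x e) \<and> m e e = e \<and>
       (\<forall>x\<in>U. m e x = z \<longrightarrow> x = z) \<and>
       \<comment> \<open>total ordering on M = eU\<close>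
       (\<forall>x\<in>M. le x x) \<and>
       (\<forall>x\<in>M. \<forall>y\<in>M. le x y \<and> le y x \<longrightarrow> x = y) \<and>
       (\<forall>x\<in>M. \<forall>y\<in>M. \<forall>w\<in>M. le x y \<and> le y w \<longrightarrow> le x w) \<and>
       (\<forall>x\<in>M. \<forall>y\<in>M. le x y \<or> le y x) \<and>
       \<comment> \<open>compatible with multiplication (so M is a bipotent semiring with + = max)\<close>
       (\<forall>x\<in>M. \<forall>y\<in>M. \<forall>w\<in>M. le x y \<longrightarrow> le (m x w) (m y w) \<and> le (m w x) (m w y)) \<and>
       \<comment> \<open>0 is least\<close>
       (\<forall>x\<in>M. le z x))"

definition transmission ::
  "('a, 'c) stmonoid_scheme \<Rightarrow> ('b, 'd) stmonoid_scheme \<Rightarrow> ('a \<Rightarrow> 'b) \<Rightarrow> bool" where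
  "transmission U V \<alpha> \<longleftrightarrow>
     (\<forall>x\<in>st_carrier U. \<alpha> x \<in> st_carrier V) \<and>
     \<alpha> (st_zero U) = st_zero V \<and> \<alpha> (st_one U) = st_one V \<and>
     (\<forall>x\<in>st_carrier U. \<forall>y\<in>st_carrier U. \<alpha> (st_mul U x y) = st_mul V (\<alpha> x) (\<alpha> y)) \<and>
     \<alpha> (st_e U) = st_e V \<and>
     (\<forall>x\<in>ghost_set U. \<forall>y\<in>ghost_set U. st_le U x y \<longrightarrow> st_le V (\<alpha> x) (\<alpha> y))"

definition TE_relation :: "('a, 'b) stmonoid_scheme \<Rightarrow> ('a \<times> 'a) set \<Rightarrow> bool" where
  "TE_relation U E \<longleftrightarrow>
     equiv (st_carrier U) E \<and>
     (\<forall>x\<in>st_carrier U. \<forall>y\<in>st_carrier U. \<forall>z\<in>st_carrier U.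
        (x, y) \<in> E \<longrightarrow> (st_mul U x z, st_mul U y z) \<in> E \<and> (st_mul U z x, st_mul U z y) \<in> E) \<and>
     (\<forall>x1\<in>ghost_set U. \<forall>x2\<in>ghost_set U. \<forall>x3\<in>ghost_set U. \<forall>x4\<in>ghost_set U.
        st_le U x1 x2 \<and> st_le U x3 x4 \<and> (x1, x4) \<in> E \<and> (x2, x3) \<in> E \<longrightarrow> (x1, x2) \<in> E) \<and>
     (\<forall>x\<in>st_carrier U. (st_mul U (st_e U) x, st_zero U) \<in> E \<longrightarrow> (x, st_zero U) \<in> E)"

definition same_st_structure :: "('a, 'b) stmonoid_scheme \<Rightarrow> ('a, 'c) stmonoid_scheme \<Rightarrow> bool" where
  "same_st_structure V W \<longleftrightarrow>
     st_carrier V = st_carrier W \<and>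
     (\<forall>x\<in>st_carrier V. \<forall>y\<in>st_carrier V. st_mul V x y = st_mul W x y) \<and>
     st_one V = st_one W \<and> st_zero V = st_zero W \<and> st_e V = st_e W \<and>
     ghost_set V = ghost_set W \<and>
     (\<forall>x\<in>ghost_set V. \<forall>y\<in>ghost_set V. st_le V x y \<longleftrightarrow> st_le W x y)"

end

theory Submission
  imports Defs
begin

locale qctx =
  fixes U :: "'a stmonoid" and E :: "('a \<times> 'a) set"
  assumes ST: "supertropical_monoid U" and TE: "TE_relation U E"
begin

abbreviation "C \<equiv> st_carrier U"
abbreviation "m \<equiv> st_mul U"
abbreviation "ee \<equiv> st_e U"
abbreviation "zz \<equiv> st_zero U"
abbreviation "oo \<equiv> st_one U"
abbreviation "le \<equiv> st_le U"
abbreviation "M \<equiv> ghost_set U"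
abbreviation "cls x \<equiv> E `` {x}"

lemmas H = ST[unfolded supertropical_monoid_def Let_def]

lemma one_in: "oo \<in> C" using H[THEN conjunct1] by blast
lemma zero_in: "zz \<in> C" using H[THEN conjunct2, THEN conjunct1] by blast
lemma e_in: "ee \<in> C" using H[THEN conjunct2, THEN conjunct2, THEN conjunct1] by blast
lemma mul_in: "x \<in> C \<Longrightarrow> y \<in> C \<Longrightarrow> m x y \<in> C" using H[THEN conjunct2, THEN conjunct2, THEN conjunct2, THEN conjunct1] by blast
lemma assoc: "x \<in> C \<Longrightarrow> y \<in> C \<Longrightarrow> w \<in> C \<Longrightarrow> m (m x y) w = m x (m y w)"
  using H[THEN conjunct2, THEN conjunct2, THEN conjunct2, THEN conjunct2, THEN conjunct1] by blast
lemma one_l: "x \<in> C \<Longrightarrow> m oo x = x" using H[THEN conjunct2, THEN conjunct2, THEN conjunct2, THEN conjunct2, THEN conjunct2, THEN conjunct1] by blast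
lemma one_r: "x \<in> C \<Longrightarrow> m x oo = x" using H[THEN conjunct2, THEN conjunct2, THEN conjunct2, THEN conjunct2, THEN conjunct2, THEN conjunct1] by blast
lemma zero_l: "x \<in> C \<Longrightarrow> m zz x = zz" using H[THEN conjunct2, THEN conjunct2, THEN conjunct2, THEN conjunct2, THEN conjunct2, THEN conjunct2, THEN conjunct1] by blast
lemma zero_r: "x \<in> C \<Longrightarrow> m x zz = zz" using H[THEN conjunct2, THEN conjunct2, THEN conjunct2, THEN conjunct2, THEN conjunct2, THEN conjunct2, THEN conjunct1] by blast
lemma e_comm: "x \<in> C \<Longrightarrow> m ee x = m x ee" using H[THEN conjunct2, THEN conjunct2, THEN conjunct2, THEN conjunct2, THEN conjunct2, THEN conjunct2, THEN conjunct2, THEN conjunct1] by blast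
lemma e_idem: "m ee ee = ee" using H[THEN conjunct2, THEN conjunct2, THEN conjunct2, THEN conjunct2, THEN conjunct2, THEN conjunct2, THEN conjunct2, THEN conjunct2, THEN conjunct1] by blast
lemma le_antisym: "x \<in> M \<Longrightarrow> y \<in> M \<Longrightarrow> le x y \<Longrightarrow> le y x \<Longrightarrow> x = y"
  using H[THEN conjunct2, THEN conjunct2, THEN conjunct2, THEN conjunct2, THEN conjunct2, THEN conjunct2, THEN conjunct2, THEN conjunct2, THEN conjunct2, THEN conjunct2, THEN conjunct2, THEN conjunct1] by blast
lemma le_trans: "x \<in> M \<Longrightarrow> y \<in> M \<Longrightarrow> w \<in> M \<Longrightarrow> le x y \<Longrightarrow> le y w \<Longrightarrow> le x w"
  using H[THEN conjunct2, THEN conjunct2, THEN conjunct2, THEN conjunct2, THEN conjunct2, THEN conjunct2, THEN conjunct2, THEN conjunct2, THEN conjunct2, THEN conjunct2, THEN conjunct2, THEN conjunct2, THEN conjunct1] by blast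
lemma le_total: "x \<in> M \<Longrightarrow> y \<in> M \<Longrightarrow> le x y \<or> le y x"
  using H[THEN conjunct2, THEN conjunct2, THEN conjunct2, THEN conjunct2, THEN conjunct2, THEN conjunct2, THEN conjunct2, THEN conjunct2, THEN conjunct2, THEN conjunct2, THEN conjunct2, THEN conjunct2, THEN conjunct2, THEN conjunct1] by blast
lemma le_mono: "x \<in> M \<Longrightarrow> y \<in> M \<Longrightarrow> w \<in> M \<Longrightarrow> le x y \<Longrightarrow> le (m x w) (m y w) \<and> le (m w x) (m w y)"
  using H[THEN conjunct2, THEN conjunct2, THEN conjunct2, THEN conjunct2, THEN conjunct2, THEN conjunct2, THEN conjunct2, THEN conjunct2, THEN conjunct2, THEN conjunct2, THEN conjunct2, THEN conjunct2, THEN conjunct2, THEN conjunct2, THEN conjunct1] by blast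
lemma zero_least: "x \<in> M \<Longrightarrow> le zz x"
  using H[THEN conjunct2, THEN conjunct2, THEN conjunct2, THEN conjunct2, THEN conjunct2, THEN conjunct2, THEN conjunct2, THEN conjunct2, THEN conjunct2, THEN conjunct2, THEN conjunct2, THEN conjunct2, THEN conjunct2, THEN conjunct2, THEN conjunct2] by blast

lemma eqv: "equiv C E" using TE unfolding TE_relation_def by blast
lemma cong: "x \<in> C \<Longrightarrow> y \<in> C \<Longrightarrow> z \<in> C \<Longrightarrow> (x, y) \<in> E \<Longrightarrow> (m x z, m y z) \<in> E \<and> (m z x, m z y) \<in> E"
  using TE unfolding TE_relation_def by blast
lemma te2: "x1 \<in> M \<Longrightarrow> x2 \<in> M \<Longrightarrow> x3 \<in> M \<Longrightarrow> x4 \<in> M \<Longrightarrow>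
   le x1 x2 \<Longrightarrow> le x3 x4 \<Longrightarrow> (x1, x4) \<in> E \<Longrightarrow> (x2, x3) \<in> E \<Longrightarrow> (x1, x2) \<in> E"
  using TE unfolding TE_relation_def by blast
lemma te3: "x \<in> C \<Longrightarrow> (m ee x, zz) \<in> E \<Longrightarrow> (x, zz) \<in> E"
  using TE unfolding TE_relation_def by blast

lemma M_iff: "x \<in> M \<longleftrightarrow> (\<exists>y\<in>C. x = m ee y)"
  unfolding ghost_set_def by blast
lemma M_sub: "x \<in> M \<Longrightarrow> x \<in> C" using M_iff mul_in e_in by auto
lemma M_e: "x \<in> M \<Longrightarrow> m ee x = x"
  using M_iff assoc e_in e_idem by metis
lemma eM: "x \<in> C \<Longrightarrow> m ee x \<in> M" using M_iff by blast
lemma zM: "zz \<in> M" using M_iff zero_r e_in zero_in by metis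
lemma MM: "x \<in> M \<Longrightarrow> y \<in> M \<Longrightarrow> m x y \<in> M"
proof -
  assume a: "x \<in> M" "y \<in> M"
  then have "m x y = m ee (m x y)" using M_e assoc M_sub e_in by metis
  then show ?thesis using eM mul_in M_sub a by metis
qed

lemma cls_eq: "x \<in> C \<Longrightarrow> y \<in> C \<Longrightarrow> cls x = cls y \<longleftrightarrow> (x, y) \<in> E"
  using eqv by (simp add: eq_equiv_class_iff)
lemma cls_in: "x \<in> C \<Longrightarrow> cls x \<in> C // E" by (simp add: quotientI)
lemma self_in: "x \<in> C \<Longrightarrow> x \<in> cls x" using eqv by (meson equiv_class_self)

lemma ballQ: "(\<forall>X\<in>C // E. P X) \<longleftrightarrow> (\<forall>x\<in>C. P (cls x))"
  by (metis quotientE quotientI)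

definition qmul :: "'a set \<Rightarrow> 'a set \<Rightarrow> 'a set" where
  "qmul A B = cls (m (SOME a. a \<in> A) (SOME b. b \<in> B))"

lemma some_cls: "x \<in> C \<Longrightarrow> (SOME a. a \<in> cls x) \<in> C \<and> ((SOME a. a \<in> cls x), x) \<in> E"
proof -
  assume x: "x \<in> C"
  have "(SOME a. a \<in> cls x) \<in> cls x" using self_in[OF x] by (rule someI)
  then have "(x, SOME a. a \<in> cls x) \<in> E" by simp
  moreover have "E \<subseteq> C \<times> C" using eqv by (rule equiv_type)
  ultimately show ?thesis using eqv unfolding equiv_def by (meson symE mem_Sigma_iff subsetD)
qed

lemma qmul_cls: "x \<in> C \<Longrightarrow> y \<in> C \<Longrightarrow> qmul (cls x) (cls y) = cls (m x y)"
proof -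
  assume x: "x \<in> C" and y: "y \<in> C"
  define a where "a = (SOME a. a \<in> cls x)"
  define b where "b = (SOME a. a \<in> cls y)"
  have a: "a \<in> C" "(a, x) \<in> E" using some_cls[OF x] a_def by auto
  have b: "b \<in> C" "(b, y) \<in> E" using some_cls[OF y] b_def by auto
  have "(m a b, m x b) \<in> E" using cong a b x by blast
  moreover have "(m x b, m x y) \<in> E" using cong b x y by blast
  ultimately have "(m a b, m x y) \<in> E" using eqv unfolding equiv_def by (meson transE)
  then show ?thesis unfolding qmul_def a_def[symmetric] b_def[symmetric]
    using cls_eq mul_in a b x y by blast
qed

definition qle :: "'a set \<Rightarrow> 'a set \<Rightarrow> bool" where
  "qle A B = (A = B \<or> (\<exists>a\<in>M. \<exists>b\<in>M. A = cls a \<and> B = cls b \<and> le a b))"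

definition V :: "'a set stmonoid" where
  "V = \<lparr>st_carrier = C // E, st_mul = qmul, st_one = cls oo, st_zero = cls zz,
        st_e = cls ee, st_le = qle\<rparr>"

lemma qle_cls: "a \<in> M \<Longrightarrow> b \<in> M \<Longrightarrow> qle (cls a) (cls b) \<longleftrightarrow> cls a = cls b \<or> le a b"
proof
  assume a: "a \<in> M" "b \<in> M" and q: "qle (cls a) (cls b)"
  show "cls a = cls b \<or> le a b"
  proof (cases "cls a = cls b \<or> le a b")
    case False
    then have ba: "le b a" using le_total a by blast
    from q False obtain a' b' where ab': "a' \<in> M" "b' \<in> M" "cls a = cls a'" "cls b = cls b'" "le a' b'"
      unfolding qle_def by blast
    have "(a', a) \<in> E" using ab' a cls_eq M_sub by blast
    moreover have "(b', b) \<in> E" using ab' a cls_eq M_sub by blast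
    ultimately have "(a', b') \<in> E" using te2[of a' b' b a] ab' a ba by blast
    then have "cls a = cls b" using ab' cls_eq M_sub by metis
    then show ?thesis using False by blast
  qed
next
  assume "a \<in> M" "b \<in> M" "cls a = cls b \<or> le a b"
  then show "qle (cls a) (cls b)" unfolding qle_def by blast
qed

lemma convex: "x \<in> M \<Longrightarrow> y \<in> M \<Longrightarrow> z \<in> M \<Longrightarrow> le x y \<Longrightarrow> le y z \<Longrightarrow> (x, z) \<in> E \<Longrightarrow> (x, y) \<in> E"
  using te2[of x y y z] eqv unfolding equiv_def refl_on_def using M_sub by blast

lemma ghost_W:
  assumes "st_carrier W = C // E" and "transmission U W (\<lambda>x. cls x)"
  shows "ghost_set W = cls ` M"
proof -
  have t: "st_e W = cls ee" "\<And>x y. x \<in> C \<Longrightarrow> y \<in> C \<Longrightarrow> st_mul W (cls x) (cls y) = cls (m x y)"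
    using assms(2) unfolding transmission_def by auto
  have "ghost_set W = {st_mul W (cls ee) X | X. X \<in> C // E}"
    unfolding ghost_set_def assms(1) t(1) ..
  also have "\<dots> = {cls (m ee x) | x. x \<in> C}"
    using t(2) e_in by (auto elim!: quotientE intro: quotientI)
  also have "\<dots> = cls ` M" unfolding ghost_set_def by blast
  finally show ?thesis .
qed

lemma trans_V: "transmission U V (\<lambda>x. cls x)"
  unfolding transmission_def V_def using cls_in qmul_cls
  by (auto simp: qle_def M_iff)

lemma ghost_V: "ghost_set V = cls ` M"
  using ghost_W[OF _ trans_V] by (simp add: V_def)

lemma ballG: "(\<forall>X\<in>cls ` M. P X) \<longleftrightarrow> (\<forall>x\<in>M. P (cls x))" by blast

lemma Esym: "(x, y) \<in> E \<Longrightarrow> (y, x) \<in> E" using eqv unfolding equiv_def by (meson symE)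
lemma Etrans: "(x, y) \<in> E \<Longrightarrow> (y, z) \<in> E \<Longrightarrow> (x, z) \<in> E" using eqv unfolding equiv_def by (meson transE)

lemma st_V: "supertropical_monoid V"
proof -
  have trans: "qle (cls a) (cls c)" if a: "a \<in> M" "b \<in> M" "c \<in> M" and
     h1: "qle (cls a) (cls b)" and h2: "qle (cls b) (cls c)" for a b c
  proof -
    have h1': "(a, b) \<in> E \<or> le a b" using h1 qle_cls[OF a(1,2)] cls_eq[of a b] M_sub a by blast
    have h2': "(b, c) \<in> E \<or> le b c" using h2 qle_cls[OF a(2,3)] cls_eq[of b c] M_sub a by blast
    have "(a, c) \<in> E \<or> le a c"
    proof (cases "le a c")
      case False
      then have ca: "le c a" using le_total a by blast
      show ?thesis
      proof (cases "le a b")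
        case ab: True
        show ?thesis
        proof (cases "le b c")
          case True then show ?thesis using le_trans a ab by blast
        next
          case False
          then have bc: "(b, c) \<in> E" using h2' by blast
          have "(c, a) \<in> E" using convex[of c a b] a ca ab Esym bc by blast
          then show ?thesis using Esym by blast
        qed
      next
        case nab: False
        then have ab: "(a, b) \<in> E" using h1' by blast
        show ?thesis
        proof (cases "le b c")
          case bc: True
          have "(b, c) \<in> E" using convex[of b c a] a bc ca Esym ab by blast
          then show ?thesis using Etrans ab by blast
        next
          case False
          then show ?thesis using h2' ab Etrans by blast
        qed
      qed
    qed simp
    then show ?thesis using qle_cls[OF a(1,3)] cls_eq[of a c] M_sub a by blast
  qed
  have anti: "cls a = cls b" if a: "a \<in> M" "b \<in> M" and
     h1: "qle (cls a) (cls b)" and h2: "qle (cls b) (cls a)" for a b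
    using h1 h2 qle_cls[OF a] qle_cls[OF a(2,1)] le_antisym[OF a] by metis
  have mono: "qle (qmul (cls a) (cls c)) (qmul (cls b) (cls c)) \<and>
              qle (qmul (cls c) (cls a)) (qmul (cls c) (cls b))"
    if a: "a \<in> M" "b \<in> M" "c \<in> M" and h: "qle (cls a) (cls b)" for a b c
  proof -
    have h': "(a, b) \<in> E \<or> le a b" using h qle_cls[OF a(1,2)] cls_eq[of a b] M_sub a by blast
    have C3: "a \<in> C" "b \<in> C" "c \<in> C" using a M_sub by auto
    have MM4: "m a c \<in> M" "m b c \<in> M" "m c a \<in> M" "m c b \<in> M" using MM a by auto
    have q: "qmul (cls a) (cls c) = cls (m a c)" "qmul (cls b) (cls c) = cls (m b c)"
      "qmul (cls c) (cls a) = cls (m c a)" "qmul (cls c) (cls b) = cls (m c b)"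
      using qmul_cls C3 by auto
    have r1: "(m a c, m b c) \<in> E \<or> le (m a c) (m b c)"
    proof (cases "(a, b) \<in> E")
      case True then show ?thesis using cong[OF C3] by blast
    next
      case False then have "le a b" using h' by blast
      then show ?thesis using le_mono[OF a] by blast
    qed
    have r2: "(m c a, m c b) \<in> E \<or> le (m c a) (m c b)"
    proof (cases "(a, b) \<in> E")
      case True then show ?thesis using cong[OF C3] by blast
    next
      case False then have "le a b" using h' by blast
      then show ?thesis using le_mono[OF a] by blast
    qed
    have s1: "cls (m a c) = cls (m b c) \<or> le (m a c) (m b c)"
      using r1 cls_eq[of "m a c" "m b c"] MM4 M_sub by blast
    have s2: "cls (m c a) = cls (m c b) \<or> le (m c a) (m c b)"
      using r2 cls_eq[of "m c a" "m c b"] MM4 M_sub by blast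
    show ?thesis unfolding q using s1 s2 qle_cls MM4 by blast
  qed
  have ez: "(x, zz) \<in> E" if x: "x \<in> C" and h: "qmul (cls ee) (cls x) = cls zz" for x
    using h qmul_cls e_in x cls_eq mul_in zero_in te3 by metis
  have VS: "st_carrier V = C // E" "st_mul V = qmul" "st_one V = cls oo" "st_zero V = cls zz"
    "st_e V = cls ee" "st_le V = qle" by (simp_all add: V_def)
  show ?thesis
    unfolding supertropical_monoid_def Let_def ghost_V VS
  proof (intro conjI)
    show "cls oo \<in> C // E" "cls zz \<in> C // E" "cls ee \<in> C // E"
      using cls_in one_in zero_in e_in by auto
    show "\<forall>x\<in>C // E. \<forall>y\<in>C // E. qmul x y \<in> C // E"
      unfolding ballQ by (simp add: qmul_cls cls_in mul_in)
    show "\<forall>x\<in>C // E. \<forall>y\<in>C // E. \<forall>w\<in>C // E. qmul (qmul x y) w = qmul x (qmul y w)"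
      unfolding ballQ by (simp add: qmul_cls mul_in assoc)
    show "\<forall>x\<in>C // E. qmul (cls oo) x = x \<and> qmul x (cls oo) = x"
      unfolding ballQ by (simp add: qmul_cls one_in one_l one_r)
    show "\<forall>x\<in>C // E. qmul (cls zz) x = cls zz \<and> qmul x (cls zz) = cls zz"
      unfolding ballQ by (simp add: qmul_cls zero_in zero_l zero_r)
    show "\<forall>x\<in>C // E. qmul (cls ee) x = qmul x (cls ee)"
      unfolding ballQ by (simp add: qmul_cls e_in e_comm)
    show "qmul (cls ee) (cls ee) = cls ee"
      by (simp add: qmul_cls e_in e_idem)
    show "\<forall>x\<in>C // E. qmul (cls ee) x = cls zz \<longrightarrow> x = cls zz"
      unfolding ballQ using ez cls_eq zero_in by blast
    show "\<forall>x\<in>cls ` M. qle x x" by (simp add: qle_def)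
    show "\<forall>x\<in>cls ` M. \<forall>y\<in>cls ` M. qle x y \<and> qle y x \<longrightarrow> x = y"
      unfolding ballG using anti by blast
    show "\<forall>x\<in>cls ` M. \<forall>y\<in>cls ` M. \<forall>w\<in>cls ` M. qle x y \<and> qle y w \<longrightarrow> qle x w"
      unfolding ballG using trans by blast
    show "\<forall>x\<in>cls ` M. \<forall>y\<in>cls ` M. qle x y \<or> qle y x"
      unfolding ballG using qle_cls le_total by blast
    show "\<forall>x\<in>cls ` M. \<forall>y\<in>cls ` M. \<forall>w\<in>cls ` M. qle x y \<longrightarrow>
            qle (qmul x w) (qmul y w) \<and> qle (qmul w x) (qmul w y)"
      unfolding ballG using mono by blast
    show "Ball (cls ` M) (qle (cls zz))"
      unfolding ballG using qle_cls zM zero_least by blast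
  qed
qed

lemma le_W:
  assumes c: "st_carrier W = C // E" and sW: "supertropical_monoid W"
    and t: "transmission U W (\<lambda>x. cls x)" and a: "a \<in> M" "b \<in> M"
  shows "st_le W (cls a) (cls b) \<longleftrightarrow> cls a = cls b \<or> le a b"
proof -
  have g: "ghost_set W = cls ` M" using ghost_W[OF c t] .
  have HW0: "(\<forall>x\<in>ghost_set W. st_le W x x) \<and>
    (\<forall>x\<in>ghost_set W. \<forall>y\<in>ghost_set W. st_le W x y \<and> st_le W y x \<longrightarrow> x = y)"
    using sW[unfolded supertropical_monoid_def Let_def, THEN conjunct2, THEN conjunct2, THEN conjunct2, THEN conjunct2, THEN conjunct2, THEN conjunct2, THEN conjunct2, THEN conjunct2, THEN conjunct2, THEN conjunct2]
    by (elim conjE) (intro conjI)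
  have ia: "cls a \<in> ghost_set W" "cls b \<in> ghost_set W" using g a by auto
  have refl: "st_le W (cls a) (cls a)" using HW0 ia by blast
  have anti: "st_le W (cls a) (cls b) \<Longrightarrow> st_le W (cls b) (cls a) \<Longrightarrow> cls a = cls b"
    using HW0 ia by blast
  have tm: "\<forall>x\<in>ghost_set U. \<forall>y\<in>ghost_set U. le x y \<longrightarrow> st_le W (cls x) (cls y)"
    using t unfolding transmission_def by (elim conjE)
  have mon1: "le a b \<Longrightarrow> st_le W (cls a) (cls b)" using tm a by blast
  have mon2: "le b a \<Longrightarrow> st_le W (cls b) (cls a)" using tm a by blast
  show ?thesis
  proof
    assume h: "st_le W (cls a) (cls b)"
    show "cls a = cls b \<or> le a b"
    proof (cases "le a b")
      case False
      then have "le b a" using le_total a by blast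
      then show ?thesis using anti mon2 h by blast
    qed simp
  next
    assume "cls a = cls b \<or> le a b"
    then show "st_le W (cls a) (cls b)" using mon1 refl by auto
  qed
qed

lemma uniq:
  assumes c: "st_carrier W = C // E" and sW: "supertropical_monoid W"
    and t: "transmission U W (\<lambda>x. cls x)"
  shows "same_st_structure V W"
proof -
  have tW: "st_e W = cls ee" "st_one W = cls oo" "st_zero W = cls zz"
    "\<And>x y. x \<in> C \<Longrightarrow> y \<in> C \<Longrightarrow> st_mul W (cls x) (cls y) = cls (m x y)"
    using t unfolding transmission_def by auto
  have VS: "st_carrier V = C // E" "st_mul V = qmul" "st_one V = cls oo" "st_zero V = cls zz"
    "st_e V = cls ee" "st_le V = qle" by (simp_all add: V_def)
  have gW: "ghost_set W = cls ` M" using ghost_W[OF c t] .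
  have leq: "\<forall>x\<in>cls ` M. \<forall>y\<in>cls ` M. qle x y \<longleftrightarrow> st_le W x y"
    unfolding ballG using le_W[OF c sW t] qle_cls by simp
  have mq: "\<forall>x\<in>C // E. \<forall>y\<in>C // E. qmul x y = st_mul W x y"
    unfolding ballQ using tW(4) qmul_cls by simp
  show ?thesis unfolding same_st_structure_def ghost_V gW VS tW c
    using mq leq by blast
qed

end

theorem theorem1p7:
  fixes U :: "'a stmonoid" and E :: "('a \<times> 'a) set"
  assumes "supertropical_monoid U"
    and "TE_relation U E"
  shows "\<exists>V :: 'a set stmonoid.
           st_carrier V = st_carrier U // E \<and> supertropical_monoid V \<and>
           transmission U V (\<lambda>x. E `` {x}) \<and>
           (\<forall>W :: 'a set stmonoid.
              st_carrier W = st_carrier U // E \<and> supertropical_monoid W \<and>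
              transmission U W (\<lambda>x. E `` {x}) \<longrightarrow> same_st_structure V W)"
proof -
  interpret qctx U E using assms by unfold_locales
  show ?thesis
  proof (intro exI[of _ V] conjI allI impI)
    show "st_carrier V = st_carrier U // E" by (simp add: V_def)
    show "supertropical_monoid V" by (rule st_V)
    show "transmission U V (\<lambda>x. E `` {x})" by (rule trans_V)
    fix W :: "'a set stmonoid"
    assume "st_carrier W = st_carrier U // E \<and> supertropical_monoid W \<and> transmission U W (\<lambda>x. E `` {x})"
    then show "same_st_structure V W" using uniq by blast
  qed
qed

end
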